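(* If there is a vector $y\geq 0$ such that $F(y)\geq 0$, then Condition A1 holds (hence a minimal solution $x_\ast$ exists), and $x_\ast\leq y$.
   Context: Inequalities between vectors/matrices are componentwise. An M-matrix is a matrix $sI-P$ with $P\geq0$ entrywise and $s\geq\rho(P)$ ($\rho$ = spectral radius). Let $M\in\mathbb R^{n\times n}$ be a nonsingular M-matrix, $a\in\mathbb R^n$ with $a\geq 0$, and $b:\mathbb R^n\times\mathbb R^n\to\mathbb R^n$ a bilinear map (not necessarily symmetric) with $b(x,y)\geq 0$ whenever $x,y\geq 0$. A solution of $Mx=a+b(x,x)$ means a vector $x\geq0$ satisfying it; a solution $x_\ast$ is minimal if $x_\ast\leq y$ for every solution $y$. $F(x):=Mx-a-b(x,x)$. A linear map $l:\mathbb R^n\to\mathbb R^m$ is weakly positive if $l(x)\geq 0$ and $l(x)\neq 0$ whenever $x\geq 0$, $x\neq 0$. Condition A1: there exist a weakly positive linear map $l:\mathbb R^n\to\mathbb R^m$ and $z\in\mathbb R^m$, $z\geq 0$, such that for every $x\geq 0$, $l(x)\leq z$ implies $l(M^{-1}(a+b(x,x)))\leq z$. *)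

theory Defs
  imports "HOL-Analysis.Analysis"
begin

definition cplx_mat :: "real^'n^'n \<Rightarrow> complex^'n^'n" where
  "cplx_mat P = (\<chi> i j. complex_of_real (P $ i $ j))"

definition is_eigenvalue :: "real^'n^'n \<Rightarrow> complex \<Rightarrow> bool" where
  "is_eigenvalue P lam \<longleftrightarrow> (\<exists>v::complex^'n. v \<noteq> 0 \<and> cplx_mat P *v v = lam *s v)"

definition spectral_radius :: "real^'n^'n \<Rightarrow> real" where
  "spectral_radius P = Max (cmod ` {lam. is_eigenvalue P lam})"

definition nonneg_mat :: "real^'n^'m \<Rightarrow> bool" where
  "nonneg_mat P \<longleftrightarrow> (\<forall>i j. P $ i $ j \<ge> 0)"

definition M_matrix :: "real^'n^'n \<Rightarrow> bool" where
  "M_matrix M \<longleftrightarrow> (\<exists>s P. M = s *\<^sub>R mat 1 - P \<and> nonneg_mat P \<and> s \<ge> spectral_radius P)"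

definition nonsingular_M_matrix :: "real^'n^'n \<Rightarrow> bool" where
  "nonsingular_M_matrix M \<longleftrightarrow> M_matrix M \<and> invertible M"

definition F_map :: "real^'n^'n \<Rightarrow> real^'n \<Rightarrow> (real^'n \<Rightarrow> real^'n \<Rightarrow> real^'n) \<Rightarrow> real^'n \<Rightarrow> real^'n" where
  "F_map M a b x = M *v x - a - b x x"

definition is_solution :: "real^'n^'n \<Rightarrow> real^'n \<Rightarrow> (real^'n \<Rightarrow> real^'n \<Rightarrow> real^'n) \<Rightarrow> real^'n \<Rightarrow> bool" where
  "is_solution M a b x \<longleftrightarrow> x \<ge> 0 \<and> M *v x = a + b x x"

definition is_minimal_solution :: "real^'n^'n \<Rightarrow> real^'n \<Rightarrow> (real^'n \<Rightarrow> real^'n \<Rightarrow> real^'n) \<Rightarrow> real^'n \<Rightarrow> bool" where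
  "is_minimal_solution M a b x \<longleftrightarrow> is_solution M a b x \<and> (\<forall>y. is_solution M a b y \<longrightarrow> x \<le> y)"

text \<open>A linear map \<open>l : R^n \<rightarrow> R^m\<close> (m arbitrary) is represented by a function
  \<open>real^'n \<Rightarrow> nat \<Rightarrow> real\<close> whose coordinates \<open>i < m\<close> are linear and whose other
  coordinates vanish; vectors of R^m are \<open>nat \<Rightarrow> real\<close> restricted to \<open>i < m\<close>.\<close>

definition linear_to :: "nat \<Rightarrow> (real^'n \<Rightarrow> nat \<Rightarrow> real) \<Rightarrow> bool" where
  "linear_to m l \<longleftrightarrow> (\<forall>i<m. linear (\<lambda>x. l x i)) \<and> (\<forall>x i. i \<ge> m \<longrightarrow> l x i = 0)"

definition weakly_positive :: "nat \<Rightarrow> (real^'n \<Rightarrow> nat \<Rightarrow> real) \<Rightarrow> bool" where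
  "weakly_positive m l \<longleftrightarrow> linear_to m l \<and>
     (\<forall>x::real^'n. x \<ge> 0 \<and> x \<noteq> 0 \<longrightarrow> (\<forall>i<m. l x i \<ge> 0) \<and> (\<exists>i<m. l x i \<noteq> 0))"

definition condition_A1 :: "real^'n^'n \<Rightarrow> real^'n \<Rightarrow> (real^'n \<Rightarrow> real^'n \<Rightarrow> real^'n) \<Rightarrow> bool" where
  "condition_A1 M a b \<longleftrightarrow> (\<exists>(m::nat) (l::real^'n \<Rightarrow> nat \<Rightarrow> real) (z::nat \<Rightarrow> real).
     weakly_positive m l \<and> (\<forall>i<m. z i \<ge> 0) \<and>
     (\<forall>x::real^'n. x \<ge> 0 \<longrightarrow> (\<forall>i<m. l x i \<le> z i) \<longrightarrow>
        (\<forall>i<m. l (matrix_inv M *v (a + b x x)) i \<le> z i)))"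

end

theory Submission
  imports Defs
begin


lemma minv:
  fixes A :: "real^'n^'n"
  assumes "invertible A"
  shows "A ** matrix_inv A = mat 1 \<and> matrix_inv A ** A = mat 1"
  using assms unfolding invertible_def matrix_inv_def by (rule someI_ex)

lemma minv_v:
  fixes A :: "real^'n^'n"
  assumes "invertible A"
  shows "A *v (matrix_inv A *v v) = v" "matrix_inv A *v (A *v v) = v"
  using minv[OF assms] by (simp_all add: matrix_vector_mul_assoc)

lemma Avec: "((t::real) *\<^sub>R mat 1 - P) *v x = t *\<^sub>R x - P *v (x::real^'n)"
proof -
  have "(t *\<^sub>R mat 1) *v x = t *\<^sub>R x"
  proof -
    have e: "t * (mat 1 :: real^'n^'n)$i$j = (if i = j then t else 0)" for i j
      by (simp add: mat_def)
    have "(\<Sum>j\<in>UNIV. (if i = j then t else 0) * x$j) = t * x$i" for i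
      by (simp add: if_distrib[of "\<lambda>c. c * _"] cong: if_cong)
    thus ?thesis by (simp add: vec_eq_iff matrix_vector_mult_def e)
  qed
  thus ?thesis by (simp add: matrix_vector_mult_diff_rdistrib)
qed

definition QQ :: "real^'n^'n \<Rightarrow> real \<Rightarrow> bool" where
  "QQ P t \<longleftrightarrow> (\<forall>x. 0 \<le> t *\<^sub>R x - P *v x \<longrightarrow> 0 \<le> x)"

lemma mv_comp: "(P *v x) $ i = (\<Sum>j\<in>UNIV. P$i$j * x$j)"
  by (simp add: matrix_vector_mult_def)

lemma W:
  fixes P :: "real^'n^'n"
  assumes P: "nonneg_mat P" and u: "\<forall>i. u$i > 0" and Au: "\<forall>i. (t *\<^sub>R u - P *v u)$i > 0"
  shows "QQ P t"
  unfolding QQ_def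
proof (intro allI impI)
  fix x :: "real^'n"
  assume f: "0 \<le> t *\<^sub>R x - P *v x"
  show "0 \<le> x"
  proof (rule ccontr)
    assume "\<not> 0 \<le> x"
    then obtain j where j: "x$j < 0" by (auto simp: less_eq_vec_def not_le)
    define g where "g i = x$i / u$i" for i
    define k where "k = Min (range g)"
    have kmin: "k \<le> g i" for i unfolding k_def by simp
    have "k \<in> range g" unfolding k_def by (rule Min_in) auto
    then obtain i0 where i0: "g i0 = k" by auto
    have "g j < 0" using j u by (simp add: g_def divide_neg_pos)
    hence kneg: "k < 0" using kmin[of j] by simp
    define z where "z = x - k *\<^sub>R u"
    have z0: "z$i \<ge> 0" for i
    proof -
      have "k \<le> x$i / u$i" using kmin[of i] g_def by simp
      hence "k * u$i \<le> x$i" using u by (simp add: pos_le_divide_eq)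
      thus ?thesis by (simp add: z_def)
    qed
    have zi0: "z$i0 = 0" using i0 u unfolding z_def g_def
      by (simp add: k_def[symmetric]) (metis less_irrefl nonzero_eq_divide_eq)
    have eq: "t *\<^sub>R z - P *v z = (t *\<^sub>R x - P *v x) - k *\<^sub>R (t *\<^sub>R u - P *v u)"
      by (simp add: z_def algebra_simps matrix_vector_mult_diff_distrib matrix_vector_mult_scaleR)
    have "(t *\<^sub>R z - P *v z)$i0 > 0"
    proof -
      have "(t *\<^sub>R x - P *v x)$i0 \<ge> 0" using f by (simp add: less_eq_vec_def)
      moreover have "k * (t *\<^sub>R u - P *v u)$i0 < 0" using kneg Au by (simp add: mult_neg_pos)
      ultimately show ?thesis by (simp add: eq)
    qed
    moreover have "(t *\<^sub>R z - P *v z)$i0 \<le> 0"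
    proof -
      have "(\<Sum>j\<in>UNIV. P$i0$j * z$j) \<ge> 0"
        using P z0 by (intro sum_nonneg) (simp add: nonneg_mat_def)
      thus ?thesis by (simp add: zi0 mv_comp)
    qed
    ultimately show False by simp
  qed
qed

lemma large:
  fixes P :: "real^'n^'n"
  assumes P: "nonneg_mat P" and t: "t > (\<Sum>i\<in>UNIV. \<Sum>j\<in>UNIV. P$i$j)"
  shows "QQ P t"
proof (rule W[OF P, where u="\<chi> i. 1"])
  show "\<forall>i. (\<chi> i. (1::real)) $ i > 0" by simp
  show "\<forall>i. (t *\<^sub>R (\<chi> i. (1::real)) - P *v (\<chi> i. 1)) $ i > 0"
  proof
    fix i
    have "(\<Sum>j\<in>UNIV. P$i$j) \<le> (\<Sum>i\<in>UNIV. \<Sum>j\<in>UNIV. P$i$j)"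
      by (rule member_le_sum) (use P in \<open>auto simp: nonneg_mat_def intro: sum_nonneg\<close>)
    thus "(t *\<^sub>R (\<chi> i. (1::real)) - P *v (\<chi> i. 1)) $ i > 0"
      using t by (simp add: mv_comp)
  qed
qed

lemma QQ_inv:
  fixes P :: "real^'n^'n"
  assumes "QQ P t"
  shows "invertible (t *\<^sub>R mat 1 - P)"
proof -
  have "\<forall>x. (t *\<^sub>R mat 1 - P) *v x = 0 \<longrightarrow> x = 0"
  proof (intro allI impI)
    fix x assume "(t *\<^sub>R mat 1 - P) *v x = 0"
    hence h: "t *\<^sub>R x - P *v x = 0" by (simp add: Avec)
    hence "0 \<le> x" using assms unfolding QQ_def by (metis order_refl)
    moreover have "t *\<^sub>R (-x) - P *v (-x) = 0" using h
    proof -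
      have "P *v (-x) = -(P *v x)" by (simp add: vec_eq_iff matrix_vector_mult_def sum_negf)
      hence "t *\<^sub>R (-x) - P *v (-x) = -(t *\<^sub>R x - P *v x)" by simp
      thus ?thesis using h by simp
    qed
    hence "0 \<le> -x" using assms unfolding QQ_def by (metis order_refl)
    ultimately show "x = 0" by (auto simp: vec_eq_iff less_eq_vec_def intro: order_antisym)
  qed
  thus ?thesis using matrix_left_invertible_ker invertible_left_inverse by blast
qed

lemma openQ:
  fixes P :: "real^'n^'n"
  assumes P: "nonneg_mat P" and Q: "QQ P t"
  shows "\<exists>d>0. \<forall>t'. t - d \<le> t' \<and> t' \<le> t \<longrightarrow> QQ P t'"
proof -
  let ?A = "t *\<^sub>R mat 1 - P"
  have inv: "invertible ?A" using QQ_inv[OF Q] .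
  define u where "u = matrix_inv ?A *v (\<chi> i. 1)"
  have Au: "t *\<^sub>R u - P *v u = (\<chi> i. 1)"
    using minv_v(1)[OF inv] by (simp add: u_def Avec)
  have "0 \<le> t *\<^sub>R u - P *v u" by (simp add: Au less_eq_vec_def)
  hence u0: "0 \<le> u" using Q unfolding QQ_def by blast
  have upos: "u$i > 0" for i
  proof (rule ccontr)
    assume "\<not> u$i > 0"
    moreover have "0 \<le> u$i" using u0 by (simp add: less_eq_vec_def)
    ultimately have ui: "u$i = 0" by linarith
    have "(\<Sum>j\<in>UNIV. P$i$j * u$j) \<ge> 0"
      using P u0 by (intro sum_nonneg) (simp add: nonneg_mat_def less_eq_vec_def)
    moreover have "(t *\<^sub>R u - P *v u)$i = 1" using Au by simp
    ultimately show False by (simp add: mv_comp ui)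
  qed
  define U where "U = (\<Sum>i\<in>UNIV. u$i)"
  have uU: "u$i \<le> U" for i
    unfolding U_def by (rule member_le_sum) (use u0 in \<open>auto simp: less_eq_vec_def\<close>)
  have Upos: "U > 0" using uU[of undefined] upos[of undefined] by simp
  show ?thesis
  proof (intro exI[of _ "1/(2*U)"] conjI allI impI)
    show "1/(2*U) > 0" using Upos by simp
    fix t' assume t': "t - 1/(2*U) \<le> t' \<and> t' \<le> t"
    show "QQ P t'"
    proof (rule W[OF P, where u=u])
      show "\<forall>i. u$i > 0" using upos by simp
      show "\<forall>i. (t' *\<^sub>R u - P *v u)$i > 0"
      proof
        fix i
        have "(t' *\<^sub>R u - P *v u)$i = 1 - (t - t') * u$i"
        proof -
          have e: "t * u$i - (P *v u)$i = 1" using arg_cong[OF Au, of "\<lambda>v. v$i"] by simp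
          show ?thesis using e by (simp add: left_diff_distrib)
        qed
        moreover have "(t - t') * u$i \<le> (1/(2*U)) * U"
          by (rule mult_mono) (use t' uU[of i] upos[of i] Upos in auto)
        moreover have "(1/(2*U)) * U = 1/2" using Upos by simp
        ultimately show "(t' *\<^sub>R u - P *v u)$i > 0" by linarith
      qed
    qed
  qed
qed

lemma closeQ:
  fixes P :: "real^'n^'n"
  assumes inv: "invertible (t0 *\<^sub>R mat 1 - P)" and eta: "eta > 0"
    and H: "\<forall>t. t0 < t \<and> t < t0 + eta \<longrightarrow> QQ P t"
  shows "QQ P t0"
  unfolding QQ_def
proof (intro allI impI)
  fix x :: "real^'n" assume f: "0 \<le> t0 *\<^sub>R x - P *v x"
  define one :: "real^'n" where "one = (\<chi> i. (1::real))"
  define u where "u = matrix_inv (t0 *\<^sub>R mat 1 - P) *v one"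
  have "(t0 *\<^sub>R mat 1 - P) *v u = one" using minv_v(1)[OF inv] u_def by simp
  hence Au: "t0 *\<^sub>R u - P *v u = one" by (simp add: Avec)
  have "0 \<le> x$i" for i
  proof (rule field_le_epsilon)
    fix e :: real assume e: "0 < e"
    define \<epsilon> where "\<epsilon> = e / (norm u + 1)"
    have epos: "\<epsilon> > 0" unfolding \<epsilon>_def using e by (intro divide_pos_pos) (auto intro: add_nonneg_pos)
    have enu: "\<epsilon> * norm u \<le> e"
    proof -
      have "\<epsilon> * (norm u + 1) = e" unfolding \<epsilon>_def using norm_ge_zero[of u] by (metis (no_types) nonzero_eq_divide_eq add_nonneg_pos zero_less_one less_irrefl mult.commute)
      moreover have "\<epsilon> * norm u \<le> \<epsilon> * (norm u + 1)" using epos by simp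
      ultimately show ?thesis by simp
    qed
    define D where "D = norm x + \<epsilon> * norm u"
    have D0: "D \<ge> 0" unfolding D_def using epos by simp
    define \<delta> where "\<delta> = min (eta/2) (\<epsilon> / (D + 1))"
    have dpos: "\<delta> > 0" unfolding \<delta>_def using eta epos D0 by simp
    have deta: "\<delta> < eta" unfolding \<delta>_def using eta by simp
    have dD: "\<delta> * D \<le> \<epsilon>"
    proof -
      have "\<delta> \<le> \<epsilon> / (D + 1)" unfolding \<delta>_def by simp
      hence "\<delta> * (D + 1) \<le> \<epsilon>" using D0 by (simp add: le_divide_eq)
      moreover have "\<delta> * D \<le> \<delta> * (D + 1)" using dpos by simp
      ultimately show ?thesis by simp
    qed
    define w where "w = x + \<epsilon> *\<^sub>R u"
    have Q: "QQ P (t0 + \<delta>)" using H dpos deta by simp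
    have eq: "(t0 + \<delta>) *\<^sub>R w - P *v w
        = (t0 *\<^sub>R x - P *v x) + \<epsilon> *\<^sub>R (t0 *\<^sub>R u - P *v u) + \<delta> *\<^sub>R x + (\<delta> * \<epsilon>) *\<^sub>R u"
      by (simp add: w_def algebra_simps)
    have "0 \<le> (t0 + \<delta>) *\<^sub>R w - P *v w"
      unfolding less_eq_vec_def
    proof
      fix j
      have fj: "(t0 *\<^sub>R x - P *v x)$j \<ge> 0" using f by (simp add: less_eq_vec_def)
      have xj: "\<delta> * x$j \<ge> - (\<delta> * norm x)"
      proof -
        have "- x$j \<le> norm x" using component_le_norm_cart[of x j] by linarith
        hence "\<delta> * (- x$j) \<le> \<delta> * norm x" using dpos by (intro mult_left_mono) auto
        thus ?thesis by simp
      qed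
      have uj: "(\<delta> * \<epsilon>) * u$j \<ge> - ((\<delta> * \<epsilon>) * norm u)"
      proof -
        have "- u$j \<le> norm u" using component_le_norm_cart[of u j] by linarith
        hence "(\<delta> * \<epsilon>) * (- u$j) \<le> (\<delta> * \<epsilon>) * norm u" using dpos epos by (intro mult_left_mono) auto
        thus ?thesis by simp
      qed
      have "\<delta> * norm x + (\<delta> * \<epsilon>) * norm u = \<delta> * D" unfolding D_def by (simp add: algebra_simps)
      hence "((t0 + \<delta>) *\<^sub>R w - P *v w)$j \<ge> 0"
        using fj xj uj dD by (simp add: eq Au one_def)
      thus "0 $ j \<le> ((t0 + \<delta>) *\<^sub>R w - P *v w)$j" by simp
    qed
    hence "0 \<le> w" using Q unfolding QQ_def by blast
    hence "0 \<le> x$i + \<epsilon> * u$i" by (simp add: less_eq_vec_def w_def)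
    moreover have "\<epsilon> * u$i \<le> \<epsilon> * norm u"
      using component_le_norm_cart[of u i] epos by (intro mult_left_mono) auto
    ultimately show "0 \<le> x$i + e" using enu by linarith
  qed
  thus "0 \<le> x" by (simp add: less_eq_vec_def)
qed



lemma mvs: "A *v (c *s x) = c *s (A *v (x::'a::comm_ring_1^'n))"
  by (simp add: vec_eq_iff matrix_vector_mult_def sum_distrib_left algebra_simps)

lemma mvsum: "A *v (\<Sum>l\<in>L. f l) = (\<Sum>l\<in>L. A *v (f l :: 'a::comm_ring_1^'n))"
  by (induction L rule: infinite_finite_induct) (simp_all add: matrix_vector_right_distrib)

lemma smult_sum: "c *s (\<Sum>l\<in>L. f l) = (\<Sum>l\<in>L. c *s (f l :: 'a::comm_ring_1^'n))"
  by (induction L rule: infinite_finite_induct) (simp_all add: vector_add_ldistrib)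

lemma eig_lin:
  fixes A :: "complex^'n^'n"
  assumes "finite L" "\<forall>l\<in>L. A *v v l = l *s v l"
  shows "(\<Sum>l\<in>L. c l *s v l) = 0 \<Longrightarrow> \<forall>l\<in>L. c l *s v l = 0"
  using assms
proof (induction L arbitrary: c rule: finite_induct)
  case empty
  then show ?case by simp
next
  case (insert m L c)
  have S: "c m *s v m + (\<Sum>l\<in>L. c l *s v l) = 0" using insert by simp
  have ev: "\<forall>l\<in>L. A *v v l = l *s v l" and evm: "A *v v m = m *s v m" using insert by auto
  have AS: "(m * c m) *s v m + (\<Sum>l\<in>L. (l * c l) *s v l) = 0"
  proof -
    have "A *v (c m *s v m + (\<Sum>l\<in>L. c l *s v l)) = 0" using S by simp
    hence "c m *s (A *v v m) + (\<Sum>l\<in>L. c l *s (A *v v l)) = 0"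
      by (simp add: matrix_vector_right_distrib mvsum mvs)
    moreover have "(\<Sum>l\<in>L. c l *s (A *v v l)) = (\<Sum>l\<in>L. (l * c l) *s v l)"
      using ev by (intro sum.cong) (auto simp: vector_smult_assoc mult.commute)
    ultimately show ?thesis using evm by (simp add: vector_smult_assoc mult.commute)
  qed
  have mS: "(m * c m) *s v m + (\<Sum>l\<in>L. (m * c l) *s v l) = 0"
  proof -
    have "m *s (c m *s v m + (\<Sum>l\<in>L. c l *s v l)) = 0" using S by simp
    thus ?thesis by (simp add: vector_add_ldistrib vector_smult_assoc smult_sum)
  qed
  have "(\<Sum>l\<in>L. ((l - m) * c l) *s v l) = 0"
  proof -
    have "(\<Sum>l\<in>L. ((l - m) * c l) *s v l) = (\<Sum>l\<in>L. (l * c l) *s v l) - (\<Sum>l\<in>L. (m * c l) *s v l)"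
      by (simp add: sum_subtractf[symmetric] left_diff_distrib vector_sub_rdistrib)
    also have "\<dots> = 0" using AS mS by (metis add_left_cancel diff_self)
    finally show ?thesis .
  qed
  hence "\<forall>l\<in>L. ((l - m) * c l) *s v l = 0" using insert.IH[of "\<lambda>l. (l - m) * c l"] ev by blast
  hence L0: "\<forall>l\<in>L. c l *s v l = 0" using insert.hyps(2)
    by auto
  hence "(\<Sum>l\<in>L. c l *s v l) = 0" by (intro sum.neutral) auto
  hence "c m *s v m = 0" using S by simp
  thus ?case using L0 by simp
qed

lemma eig_finite: "finite {lam. is_eigenvalue (P::real^'n^'n) lam}"
proof (rule ccontr)
  let ?E = "{lam. is_eigenvalue P lam}"
  let ?d = "vec.dim (UNIV :: (complex^'n) set)"
  assume "infinite ?E"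
  then obtain L where L: "L \<subseteq> ?E" "finite L" "card L = Suc ?d"
    using infinite_arbitrarily_large by blast
  define v where "v l = (SOME w. w \<noteq> 0 \<and> cplx_mat P *v w = l *s w)" for l
  have vp: "v l \<noteq> 0 \<and> cplx_mat P *v v l = l *s v l" if "l \<in> L" for l
  proof -
    have "\<exists>w. w \<noteq> 0 \<and> cplx_mat P *v w = l *s w" using L(1) that by (auto simp: is_eigenvalue_def)
    thus ?thesis unfolding v_def by (rule someI_ex)
  qed
  have inj: "inj_on v L"
  proof
    fix l1 l2 assume l: "l1 \<in> L" "l2 \<in> L" "v l1 = v l2"
    hence "l1 *s v l1 = l2 *s v l1" using vp by metis
    hence "(l1 - l2) *s v l1 = 0" by (simp add: vector_sub_rdistrib)
    thus "l1 = l2" using vp[OF l(1)] by simp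
  qed
  have ind: "vec.independent (v ` L)"
  proof
    assume "vec.dependent (v ` L)"
    then obtain u where u: "\<exists>w\<in>v ` L. u w \<noteq> 0" "(\<Sum>w\<in>v ` L. u w *s w) = 0"
      using vec.dependent_finite[of "v ` L"] L(2) by auto
    have "(\<Sum>l\<in>L. u (v l) *s v l) = 0" using u(2) by (simp add: sum.reindex[OF inj])
    moreover have ev: "\<forall>l\<in>L. cplx_mat P *v v l = l *s v l" using vp by auto
    ultimately have "\<forall>l\<in>L. u (v l) *s v l = 0"
      using eig_lin[OF L(2) ev, of "\<lambda>l. u (v l)"] by simp
    thus False using u(1) vp by auto
  qed
  have "card (v ` L) \<le> vec.dim (v ` L)" using vec.independent_bound_general[OF ind] by simp
  also have "\<dots> \<le> ?d" by (rule vec.dim_subset) simp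
  finally have "card L \<le> ?d" by (simp add: card_image[OF inj])
  thus False using L(3) by simp
qed

lemma eig_real:
  fixes P :: "real^'n^'n"
  assumes "\<not> invertible (t *\<^sub>R mat 1 - P)"
  shows "is_eigenvalue P (complex_of_real t)"
proof -
  obtain x where x: "x \<noteq> 0" "(t *\<^sub>R mat 1 - P) *v x = 0"
    using assms matrix_left_invertible_ker invertible_left_inverse by blast
  hence tx: "P *v x = t *\<^sub>R x" by (simp add: Avec)
  define w :: "complex^'n" where "w = (\<chi> i. complex_of_real (x$i))"
  have "w \<noteq> 0" using x(1) by (auto simp: w_def vec_eq_iff)
  moreover have "cplx_mat P *v w = complex_of_real t *s w"
  proof -
    have "(\<Sum>j\<in>UNIV. complex_of_real (P$i$j) * complex_of_real (x$j)) = complex_of_real t * complex_of_real (x$i)" for i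
    proof -
      have "(\<Sum>j\<in>UNIV. P$i$j * x$j) = t * x$i" using arg_cong[OF tx, of "\<lambda>v. v$i"] by (simp add: mv_comp)
      hence "complex_of_real (\<Sum>j\<in>UNIV. P$i$j * x$j) = complex_of_real (t * x$i)" by simp
      thus ?thesis by (simp add: of_real_sum)
    qed
    thus ?thesis by (simp add: vec_eq_iff matrix_vector_mult_def cplx_mat_def w_def)
  qed
  ultimately show ?thesis unfolding is_eigenvalue_def by blast
qed

lemma inv_above:
  fixes P :: "real^'n^'n"
  assumes "t > spectral_radius P"
  shows "invertible (t *\<^sub>R mat 1 - P)"
proof (rule ccontr)
  assume "\<not> invertible (t *\<^sub>R mat 1 - P)"
  hence "complex_of_real t \<in> {lam. is_eigenvalue P lam}" using eig_real by blast
  hence "cmod (complex_of_real t) \<in> cmod ` {lam. is_eigenvalue P lam}" by (rule imageI)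
  hence "cmod (complex_of_real t) \<le> spectral_radius P"
    unfolding spectral_radius_def using eig_finite[of P] by (intro Max_ge) auto
  thus False using assms by simp
qed



lemma allQ:
  fixes P :: "real^'n^'n"
  assumes P: "nonneg_mat P" and s: "spectral_radius P \<le> s"
  shows "\<forall>t>s. QQ P t"
proof (rule ccontr)
  assume "\<not> (\<forall>t>s. QQ P t)"
  then obtain t0 where t0: "t0 > s" "\<not> QQ P t0" by auto
  define T where "T = (\<Sum>i\<in>UNIV. \<Sum>j\<in>UNIV. P$i$j) + 1"
  have QT: "QQ P t" if "t \<ge> T" for t using large[OF P] that T_def by simp
  define B where "B = {t. s < t \<and> \<not> QQ P t}"
  have Bne: "B \<noteq> {}" using t0 B_def by auto
  have Bbdd: "bdd_above B" unfolding bdd_above_def B_def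
    by (rule exI[of _ T]) (auto intro: ccontr QT simp: not_le)
  define tau where "tau = Sup B"
  have tau0: "t0 \<le> tau" unfolding tau_def using t0 by (intro cSup_upper Bbdd) (auto simp: B_def)
  have above: "QQ P t" if "t > tau" for t
  proof (rule ccontr)
    assume "\<not> QQ P t"
    hence "t \<in> B" using that tau0 t0 by (auto simp: B_def)
    hence "t \<le> tau" unfolding tau_def by (intro cSup_upper Bbdd)
    thus False using that by simp
  qed
  have inv: "invertible (tau *\<^sub>R mat 1 - P)" using inv_above[of P tau] s tau0 t0 by simp
  have Qtau: "QQ P tau" by (rule closeQ[OF inv, of 1]) (auto intro: above)
  obtain d where d: "d > 0" "\<forall>t'. tau - d \<le> t' \<and> t' \<le> tau \<longrightarrow> QQ P t'"
    using openQ[OF P Qtau] by blast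
  have "tau \<le> tau - d" unfolding tau_def[of] 
  proof (rule cSup_least[OF Bne])
    fix b assume "b \<in> B"
    hence nb: "\<not> QQ P b" by (simp add: B_def)
    hence btau: "b \<le> tau" using above by (meson not_le)
    show "b \<le> Sup B - d"
    proof (rule ccontr)
      assume "\<not> b \<le> Sup B - d"
      hence "tau - d \<le> b \<and> b \<le> tau" using btau tau_def by simp
      thus False using d(2) nb by blast
    qed
  qed
  thus False using d by simp
qed

lemma Mx_nonneg:
  fixes M :: "real^'n^'n"
  assumes "nonsingular_M_matrix M"
  shows "\<forall>x. 0 \<le> M *v x \<longrightarrow> 0 \<le> x"
proof -
  obtain s P where M: "M = s *\<^sub>R mat 1 - P" "nonneg_mat P" "s \<ge> spectral_radius P" "invertible M"
    using assms unfolding nonsingular_M_matrix_def M_matrix_def by blast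
  have "QQ P s" using M allQ[OF M(2,3)] by (intro closeQ[of s P 1]) auto
  thus ?thesis using M(1) by (simp add: QQ_def Avec)
qed



theorem mainTheorem5:
  fixes M :: "real^'n^'n" and a :: "real^'n" and b :: "real^'n \<Rightarrow> real^'n \<Rightarrow> real^'n"
    and y :: "real^'n"
  assumes "nonsingular_M_matrix M"
    and "a \<ge> 0"
    and "bilinear b"
    and "\<And>u v. u \<ge> 0 \<Longrightarrow> v \<ge> 0 \<Longrightarrow> b u v \<ge> 0"
    and "y \<ge> 0"
    and "F_map M a b y \<ge> 0"
  shows "condition_A1 M a b \<and> (\<exists>xs. is_minimal_solution M a b xs \<and> xs \<le> y)"
proof -
  note Mm = assms(1) and a0 = assms(2) and bil = assms(3) and bpos = assms(4) and y0 = assms(5)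
    and Fy = assms(6)
  have inv: "invertible M" using Mm by (simp add: nonsingular_M_matrix_def)
  define N where "N = matrix_inv M"
  have MN: "M *v (N *v v) = v" for v using minv_v(1)[OF inv] N_def by simp
  have NM: "N *v (M *v v) = v" for v using minv_v(2)[OF inv] N_def by simp
  have Npos: "0 \<le> N *v v" if "0 \<le> v" for v
    using Mx_nonneg[OF Mm] MN that by metis
  have Nmono: "N *v u \<le> N *v v" if "u \<le> v" for u v
  proof -
    have "0 \<le> v - u" using that by (simp add: less_eq_vec_def)
    hence "0 \<le> N *v (v - u)" by (rule Npos)
    thus ?thesis by (simp add: matrix_vector_mult_diff_distrib less_eq_vec_def)
  qed
  have bmono: "b x x \<le> b z z" if "0 \<le> x" "x \<le> z" for x z
  proof -
    have xz: "0 \<le> z - x" using that by (simp add: less_eq_vec_def)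
    have z0: "0 \<le> z" using that order_trans by blast
    have "b z z - b x x = b (z - x) z + b x (z - x)"
      using bil by (simp add: bilinear_lsub bilinear_rsub algebra_simps)
    moreover have "0 \<le> b (z - x) z + b x (z - x)" using bpos[OF xz z0] bpos[OF that(1) xz]
      by (simp add: less_eq_vec_def)
    ultimately have "0 \<le> b z z - b x x" by simp
    thus ?thesis by (simp add: less_eq_vec_def)
  qed
  define phi where "phi x = N *v (a + b x x)" for x
  have phi0: "0 \<le> phi x" if "0 \<le> x" for x
    unfolding phi_def by (rule Npos) (use a0 bpos[OF that that] in \<open>simp add: less_eq_vec_def\<close>)
  have phimono: "phi x \<le> phi z" if "0 \<le> x" "x \<le> z" for x z
    unfolding phi_def by (rule Nmono) (use bmono[OF that] in \<open>simp add: less_eq_vec_def\<close>)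
  have phiy: "phi y \<le> y"
  proof -
    have "y - phi y = N *v (M *v y - a - b y y)"
      by (simp add: phi_def NM matrix_vector_mult_diff_distrib algebra_simps)
    also have "0 \<le> \<dots>" using Npos Fy by (simp add: F_map_def)
    finally show ?thesis by (simp add: less_eq_vec_def)
  qed
  have phisol: "phi z = z" if "is_solution M a b z" for z
    using that NM by (metis is_solution_def phi_def)
  have A1: "condition_A1 M a b"
  proof -
    obtain g where g: "bij_betw g {0..<card (UNIV::'n set)} (UNIV::'n set)"
      using ex_bij_betw_nat_finite[of "UNIV::'n set"] by auto
    define m where "m = card (UNIV::'n set)"
    define l where "l x i = (if i < m then x $ g i else 0)" for x :: "real^'n" and i
    define z where "z i = (if i < m then y $ g i else 0)" for i
    have gs: "\<exists>i<m. g i = k" for k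
      using g unfolding bij_betw_def m_def by (metis atLeastLessThan_iff imageE UNIV_I)
    have lin: "linear_to m l"
      unfolding linear_to_def l_def by (auto intro: bounded_linear.linear[OF bounded_linear_vec_nth])
    have wp: "weakly_positive m l"
      unfolding weakly_positive_def
    proof (intro conjI lin allI impI)
      fix x :: "real^'n" and i assume x: "0 \<le> x \<and> x \<noteq> 0" and "i < m"
      show "0 \<le> l x i" using x by (simp add: l_def less_eq_vec_def)
    next
      fix x :: "real^'n" assume x: "0 \<le> x \<and> x \<noteq> 0"
      obtain k where "x $ k \<noteq> 0" using x by (auto simp: vec_eq_iff)
      then show "\<exists>i<m. l x i \<noteq> 0" using gs[of k] by (auto simp: l_def)
    qed
    have zpos: "\<forall>i<m. 0 \<le> z i" using y0 by (simp add: z_def less_eq_vec_def)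
    have "\<forall>x::real^'n. 0 \<le> x \<longrightarrow> (\<forall>i<m. l x i \<le> z i) \<longrightarrow>
        (\<forall>i<m. l (matrix_inv M *v (a + b x x)) i \<le> z i)"
    proof (intro allI impI)
      fix x :: "real^'n" and i assume x: "0 \<le> x" and lz: "\<forall>i<m. l x i \<le> z i" and i: "i < m"
      have "x \<le> y" unfolding less_eq_vec_def
      proof
        fix k obtain j where "j < m" "g j = k" using gs by blast
        thus "x $ k \<le> y $ k" using lz by (auto simp: l_def z_def)
      qed
      hence "phi x \<le> y" using phimono[OF x] phiy order_trans by blast
      thus "l (matrix_inv M *v (a + b x x)) i \<le> z i"
        using i by (simp add: l_def z_def phi_def N_def less_eq_vec_def)
    qed
    thus ?thesis unfolding condition_A1_def using wp zpos by blast
  qed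
  define xs where "xs k = (phi ^^ k) 0" for k
  have xs0: "0 \<le> xs k" for k
    by (induction k) (simp_all add: xs_def phi0)
  have xsinc: "xs k \<le> xs (Suc k)" for k
  proof (induction k)
    case 0 show ?case using phi0[of 0] by (simp add: xs_def)
  next
    case (Suc k) show ?case using phimono[OF xs0 Suc] by (simp add: xs_def)
  qed
  have xsbd: "xs k \<le> z" if "0 \<le> z" "phi z \<le> z" for z k
  proof (induction k)
    case 0 show ?case using that by (simp add: xs_def)
  next
    case (Suc k)
    have "phi (xs k) \<le> phi z" using phimono[OF xs0 Suc] .
    thus ?case using that(2) order_trans by (simp add: xs_def)
  qed
  define xst where "xst = (\<chi> i. SUP k. xs k $ i)"
  have bdd: "bdd_above (range (\<lambda>k. xs k $ i))" for i
    using xsbd[OF y0 phiy] by (auto simp: bdd_above_def less_eq_vec_def)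
  have inc: "incseq (\<lambda>k. xs k $ i)" for i
    using xsinc by (intro incseq_SucI) (simp add: less_eq_vec_def)
  have lim: "xs \<longlonglongrightarrow> xst"
    by (rule vec_tendstoI) (simp add: xst_def LIMSEQ_incseq_SUP[OF bdd inc])
  have below: "xst \<le> z" if "0 \<le> z" "phi z \<le> z" for z
    unfolding less_eq_vec_def xst_def using xsbd[OF that]
    by (auto intro!: cSUP_least simp: less_eq_vec_def)
  have xst0: "0 \<le> xst"
    unfolding less_eq_vec_def xst_def using xs0 bdd
    by (auto intro: order_trans[OF _ cSUP_upper[of 0]] simp: less_eq_vec_def)
  have fixp: "phi xst = xst"
  proof -
    have bb: "bounded_bilinear b" using bil bilinear_conv_bounded_bilinear by blast
    have bl: "bounded_linear (\<lambda>v. N *v v)"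
      using linear_conv_bounded_linear matrix_vector_mul_linear by blast
    have "(\<lambda>k. phi (xs k)) \<longlonglongrightarrow> phi xst"
      unfolding phi_def
      by (intro bounded_linear.tendsto[OF bl] tendsto_add tendsto_const
          bounded_bilinear.tendsto[OF bb] lim)
    moreover have "(\<lambda>k. phi (xs k)) \<longlonglongrightarrow> xst"
      using LIMSEQ_Suc[OF lim] by (simp add: xs_def)
    ultimately show ?thesis using LIMSEQ_unique by blast
  qed
  have sol: "is_solution M a b xst"
    unfolding is_solution_def using xst0 fixp MN[of "a + b xst xst"]
    by (metis phi_def)
  have "is_minimal_solution M a b xst"
    unfolding is_minimal_solution_def
  proof (intro conjI sol allI impI)
    fix z assume z: "is_solution M a b z"
    show "xst \<le> z" using below[of z] phisol[OF z] z by (simp add: is_solution_def)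
  qed
  moreover have "xst \<le> y" using below[OF y0 phiy] .
  ultimately show ?thesis using A1 by blast
qed


end
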